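(* Let $V$ be a finite dimensional real vector space, and let $(V,\nu,\tau,\tau^* )$ and $(V,\mu,\tau',\tau'^{*})$ be PN spaces such that $\tau^*$ and $\tau'^{*}$ are Archimedean and $\nu_p\neq\varepsilon_\infty$, $\mu_p\neq\varepsilon_\infty$ for every $p\in V$. Then $\nu$ and $\mu$ are equivalent, i.e. for every sequence $(p_m)$ in $V$ and every $p\in V$, $p_m$ strongly converges to $p$ with respect to $\nu$ if and only if $p_m$ strongly converges to $p$ with respect to $\mu$.
   Context: $\Delta^{+}$ is the set of functions $F:[-\infty,+\infty]\to[0,1]$ that are left-continuous on $\mathbb{R}$, nondecreasing, with $F(0)=0$ and $F(+\infty)=1$, ordered pointwise. $\varepsilon_0$ is the d.f. equal to $0$ for $x\le0$ and $1$ for $x>0$; $\varepsilon_\infty$ is the d.f. equal to $0$ on all of $\mathbb{R}$. A triangle function is a map $\tau:\Delta^+\times\Delta^+\to\Delta^+$ that is associative, commutative, nondecreasing in each argument, with unit $\varepsilon_0$; it is Archimedean if its only idempotents are $\varepsilon_0$ and $\varepsilon_\infty$. A PN space is a quadruple $(V,\nu,\tau,\tau^* )$ with $V$ a real vector space, $\tau\le\tau^*$ continuous triangle functions, and $\nu:V\to\Delta^+$ such that for all $p,q\in V$: (N1) $\nu_p=\varepsilon_0$ iff $p=\theta$; (N2) $\nu_{-p}=\nu_p$; (N3) $\nu_{p+q}\ge\tau(\nu_p,\nu_q)$; (N4) $\nu_p\le\tau^*(\nu_{\lambda p},\nu_{(1-\lambda)p})$ for all $\lambda\in[0,1]$. A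 sequence $(p_m)$ strongly converges to $p$ w.r.t. $\nu$ if for every $\lambda>0$ there is $N$ with $\nu_{p_m-p}(\lambda)>1-\lambda$ for $m\ge N$. *)

theory Defs
  imports "HOL-Analysis.Analysis"
begin

text \<open>Distance distribution functions: maps from the extended reals [-inf,+inf] to [0,1].\<close>
type_synonym dd = "ereal \<Rightarrow> real"

definition Delta_plus :: "dd set" where
  "Delta_plus = {F. (\<forall>x. 0 \<le> F x \<and> F x \<le> 1) \<and> mono F \<and> F 0 = 0 \<and> F \<infinity> = 1 \<and>
      (\<forall>x::real. continuous (at_left x) (\<lambda>y::real. F (ereal y)))}"

definition eps0 :: dd where
  "eps0 = (\<lambda>x. if x \<le> 0 then 0 else 1)"

definition eps_inf :: dd where
  "eps_inf = (\<lambda>x. if x = \<infinity> then 1 else 0)"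

text \<open>Weak convergence in Delta_plus: convergence at every (real) continuity point of the limit.
  On Delta_plus this is the convergence of the modified Levy metric.\<close>
definition weak_conv :: "(nat \<Rightarrow> dd) \<Rightarrow> dd \<Rightarrow> bool" where
  "weak_conv Fs F \<longleftrightarrow> (\<forall>x::real. isCont (\<lambda>y::real. F (ereal y)) x \<longrightarrow>
      (\<lambda>n. Fs n (ereal x)) \<longlonglongrightarrow> F (ereal x))"

definition triangle_function :: "(dd \<Rightarrow> dd \<Rightarrow> dd) \<Rightarrow> bool" where
  "triangle_function T \<longleftrightarrow>
     (\<forall>F\<in>Delta_plus. \<forall>G\<in>Delta_plus. T F G \<in> Delta_plus) \<and>
     (\<forall>F\<in>Delta_plus. \<forall>G\<in>Delta_plus. \<forall>H\<in>Delta_plus. T (T F G) H = T F (T G H)) \<and>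
     (\<forall>F\<in>Delta_plus. \<forall>G\<in>Delta_plus. T F G = T G F) \<and>
     (\<forall>F\<in>Delta_plus. \<forall>F'\<in>Delta_plus. \<forall>G\<in>Delta_plus. F \<le> F' \<longrightarrow> T F G \<le> T F' G) \<and>
     (\<forall>F\<in>Delta_plus. T F eps0 = F)"

text \<open>Continuity w.r.t. the (metrizable) weak-convergence topology on Delta_plus x Delta_plus,
  expressed sequentially.\<close>
definition continuous_tf :: "(dd \<Rightarrow> dd \<Rightarrow> dd) \<Rightarrow> bool" where
  "continuous_tf T \<longleftrightarrow>
     (\<forall>Fs Gs F G. (\<forall>n. Fs n \<in> Delta_plus) \<longrightarrow> (\<forall>n. Gs n \<in> Delta_plus) \<longrightarrow>
        F \<in> Delta_plus \<longrightarrow> G \<in> Delta_plus \<longrightarrow> weak_conv Fs F \<longrightarrow> weak_conv Gs G \<longrightarrow>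
        weak_conv (\<lambda>n. T (Fs n) (Gs n)) (T F G))"

definition archimedean_tf :: "(dd \<Rightarrow> dd \<Rightarrow> dd) \<Rightarrow> bool" where
  "archimedean_tf T \<longleftrightarrow> (\<forall>F\<in>Delta_plus. T F F = F \<longrightarrow> F = eps0 \<or> F = eps_inf)"

definition PN_space :: "('a::real_vector \<Rightarrow> dd) \<Rightarrow> (dd \<Rightarrow> dd \<Rightarrow> dd) \<Rightarrow> (dd \<Rightarrow> dd \<Rightarrow> dd) \<Rightarrow> bool" where
  "PN_space \<nu> T Ts \<longleftrightarrow>
     triangle_function T \<and> continuous_tf T \<and> triangle_function Ts \<and> continuous_tf Ts \<and>
     (\<forall>F\<in>Delta_plus. \<forall>G\<in>Delta_plus. T F G \<le> Ts F G) \<and>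
     (\<forall>p. \<nu> p \<in> Delta_plus) \<and>
     (\<forall>p. \<nu> p = eps0 \<longleftrightarrow> p = 0) \<and>
     (\<forall>p. \<nu> (- p) = \<nu> p) \<and>
     (\<forall>p q. T (\<nu> p) (\<nu> q) \<le> \<nu> (p + q)) \<and>
     (\<forall>p. \<forall>l::real. 0 \<le> l \<and> l \<le> 1 \<longrightarrow> \<nu> p \<le> Ts (\<nu> (l *\<^sub>R p)) (\<nu> ((1 - l) *\<^sub>R p)))"

definition strongly_converges :: "('a::real_vector \<Rightarrow> dd) \<Rightarrow> (nat \<Rightarrow> 'a) \<Rightarrow> 'a \<Rightarrow> bool" where
  "strongly_converges \<nu> ps p \<longleftrightarrow>
     (\<forall>l::real>0. \<exists>N. \<forall>m\<ge>N. \<nu> (ps m - p) (ereal l) > 1 - l)"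

end

theory Submission
  imports Defs
begin

lemma eps0_in: "eps0 \<in> Delta_plus"
proof -
  have "continuous (at_left x) (\<lambda>y::real. eps0 (ereal y))" for x :: real
  proof (cases "x \<le> 0")
    case True
    have "eventually (\<lambda>y. eps0 (ereal y) = 0) (at_left x)"
      unfolding eventually_at_filter
      by (rule always_eventually) (use True in \<open>auto simp: eps0_def\<close>)
    hence "((\<lambda>y. eps0 (ereal y)) \<longlongrightarrow> 0) (at_left x)"
      by (rule tendsto_eventually)
    thus ?thesis using True by (simp add: continuous_within eps0_def)
  next
    case False
    have "eventually (\<lambda>y. y \<in> {0<..<x}) (at_left x)"
      using False by (intro eventually_at_leftI[of 0]) auto
    hence "eventually (\<lambda>y. eps0 (ereal y) = 1) (at_left x)"
      by eventually_elim (auto simp: eps0_def)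
    hence "((\<lambda>y. eps0 (ereal y)) \<longlongrightarrow> 1) (at_left x)"
      by (rule tendsto_eventually)
    thus ?thesis using False by (simp add: continuous_within eps0_def)
  qed
  moreover have "mono eps0" unfolding mono_def eps0_def by auto
  ultimately show ?thesis unfolding Delta_plus_def by (auto simp: eps0_def)
qed

lemma DP_bounds: "F \<in> Delta_plus \<Longrightarrow> 0 \<le> F x \<and> F x \<le> 1"
  by (auto simp: Delta_plus_def)
lemma DP_mono: "F \<in> Delta_plus \<Longrightarrow> x \<le> y \<Longrightarrow> F x \<le> F y"
  by (auto simp: Delta_plus_def mono_def)
lemma DP_0: "F \<in> Delta_plus \<Longrightarrow> F 0 = 0"
  by (auto simp: Delta_plus_def)
lemma DP_inf: "F \<in> Delta_plus \<Longrightarrow> F \<infinity> = 1"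
  by (auto simp: Delta_plus_def)
lemma DP_lc: "F \<in> Delta_plus \<Longrightarrow> continuous (at_left x) (\<lambda>y::real. F (ereal y))"
  by (auto simp: Delta_plus_def)
lemma DP_nonpos: "F \<in> Delta_plus \<Longrightarrow> x \<le> 0 \<Longrightarrow> F x = 0"
  using DP_mono[of F x 0] DP_0[of F] DP_bounds[of F x] by auto

lemma DP_le_eps0: "F \<in> Delta_plus \<Longrightarrow> F \<le> eps0"
  unfolding le_fun_def eps0_def
proof
  fix x assume F: "F \<in> Delta_plus"
  show "F x \<le> (if x \<le> 0 then 0 else 1)"
  proof (cases "x \<le> 0")
    case True thus ?thesis using DP_nonpos[OF F True] by simp
  next
    case False thus ?thesis using DP_bounds[OF F] by simp
  qed
qed

lemma tf_le: assumes "triangle_function T" "F \<in> Delta_plus" "G \<in> Delta_plus"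
  shows "T F G \<le> F"
proof -
  have "T F G = T G F" using assms unfolding triangle_function_def by blast
  also have "\<dots> \<le> T eps0 F"
    using assms eps0_in DP_le_eps0[OF assms(3)] unfolding triangle_function_def by blast
  also have "\<dots> = T F eps0" using assms eps0_in unfolding triangle_function_def by blast
  also have "\<dots> = F" using assms unfolding triangle_function_def by blast
  finally show ?thesis .
qed

lemma PN_DP: "PN_space \<nu> T Ts \<Longrightarrow> \<nu> p \<in> Delta_plus"
  by (simp add: PN_space_def)
lemma PN_N1: "PN_space \<nu> T Ts \<Longrightarrow> \<nu> p = eps0 \<longleftrightarrow> p = 0"
  unfolding PN_space_def by blast
lemma PN_N2: "PN_space \<nu> T Ts \<Longrightarrow> \<nu> (- p) = \<nu> p"
  unfolding PN_space_def by blast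
lemma PN_N3: "PN_space \<nu> T Ts \<Longrightarrow> T (\<nu> p) (\<nu> q) \<le> \<nu> (p + q)"
  unfolding PN_space_def by blast
lemma PN_N4: "PN_space \<nu> T Ts \<Longrightarrow> 0 \<le> l \<Longrightarrow> l \<le> 1 \<Longrightarrow> \<nu> p \<le> Ts (\<nu> (l *\<^sub>R p)) (\<nu> ((1 - l) *\<^sub>R p))"
  unfolding PN_space_def by blast
lemma PN_T: "PN_space \<nu> T Ts \<Longrightarrow> triangle_function T \<and> continuous_tf T \<and> triangle_function Ts \<and> continuous_tf Ts"
  unfolding PN_space_def by blast

lemma scale_mono:
  assumes "PN_space \<nu> T Ts" "\<bar>c\<bar> \<le> 1"
  shows "\<nu> q \<le> \<nu> (c *\<^sub>R q)"
proof -
  have A: "\<nu> q \<le> \<nu> (l *\<^sub>R q)" if "0 \<le> l" "l \<le> 1" for l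
  proof -
    have "\<nu> q \<le> Ts (\<nu> (l *\<^sub>R q)) (\<nu> ((1 - l) *\<^sub>R q))"
      using PN_N4[OF assms(1) that] .
    also have "\<dots> \<le> \<nu> (l *\<^sub>R q)"
      using PN_T[OF assms(1)] PN_DP[OF assms(1)] by (intro tf_le) auto
    finally show ?thesis .
  qed
  show ?thesis
  proof (cases "c \<ge> 0")
    case True thus ?thesis using A assms by auto
  next
    case False
    have "\<nu> (c *\<^sub>R q) = \<nu> (- (c *\<^sub>R q))" using PN_N2[OF assms(1)] by metis
    also have "- (c *\<^sub>R q) = (-c) *\<^sub>R q" by simp
    finally show ?thesis using A[of "-c"] False assms by auto
  qed
qed

lemma ctf_apply: "continuous_tf T \<Longrightarrow> (\<And>n. Fs n \<in> Delta_plus) \<Longrightarrow> (\<And>n. Gs n \<in> Delta_plus) \<Longrightarrow>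
  F \<in> Delta_plus \<Longrightarrow> G \<in> Delta_plus \<Longrightarrow> weak_conv Fs F \<Longrightarrow> weak_conv Gs G \<Longrightarrow>
  weak_conv (\<lambda>n. T (Fs n) (Gs n)) (T F G)"
  unfolding continuous_tf_def by blast

definition conv0 :: "('a::real_vector \<Rightarrow> dd) \<Rightarrow> (nat \<Rightarrow> 'a) \<Rightarrow> bool" where
  "conv0 \<nu> xs \<longleftrightarrow> (\<forall>x::real>0. (\<lambda>m. \<nu> (xs m) (ereal x)) \<longlonglongrightarrow> 1)"

lemma strong_iff: assumes "PN_space \<nu> T Ts"
  shows "strongly_converges \<nu> ps p \<longleftrightarrow> conv0 \<nu> (\<lambda>m. ps m - p)"
proof
  assume S: "strongly_converges \<nu> ps p"
  show "conv0 \<nu> (\<lambda>m. ps m - p)" unfolding conv0_def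
  proof (intro allI impI)
    fix x :: real assume "x > 0"
    show "(\<lambda>m. \<nu> (ps m - p) (ereal x)) \<longlonglongrightarrow> 1"
    proof (rule LIMSEQ_I)
      fix r :: real assume "r > 0"
      define l where "l = min x (r/2)"
      have "l > 0" using \<open>x>0\<close> \<open>r>0\<close> by (simp add: l_def)
      then obtain N where N: "\<forall>m\<ge>N. \<nu> (ps m - p) (ereal l) > 1 - l"
        using S unfolding strongly_converges_def by blast
      show "\<exists>N. \<forall>m\<ge>N. norm (\<nu> (ps m - p) (ereal x) - 1) < r"
      proof (intro exI allI impI)
        fix m assume "m \<ge> N"
        have "\<nu> (ps m - p) (ereal l) \<le> \<nu> (ps m - p) (ereal x)"
          using DP_mono[OF PN_DP[OF assms]] by (simp add: l_def)
        moreover have "\<nu> (ps m - p) (ereal x) \<le> 1" using DP_bounds[OF PN_DP[OF assms]] by blast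
        moreover have "l \<le> r/2" by (simp add: l_def)
        moreover have "\<nu> (ps m - p) (ereal l) > 1 - l" using N \<open>m \<ge> N\<close> by blast
        ultimately show "norm (\<nu> (ps m - p) (ereal x) - 1) < r"
          using \<open>r>0\<close> unfolding real_norm_def by arith
      qed
    qed
  qed
next
  assume C: "conv0 \<nu> (\<lambda>m. ps m - p)"
  show "strongly_converges \<nu> ps p" unfolding strongly_converges_def
  proof (intro allI impI)
    fix l :: real assume "l > 0"
    then have "(\<lambda>m. \<nu> (ps m - p) (ereal l)) \<longlonglongrightarrow> 1" using C unfolding conv0_def by blast
    then obtain N where "\<forall>m\<ge>N. norm (\<nu> (ps m - p) (ereal l) - 1) < l"
      using LIMSEQ_D \<open>l>0\<close> by blast
    thus "\<exists>N. \<forall>m\<ge>N. 1 - l < \<nu> (ps m - p) (ereal l)"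
      unfolding real_norm_def by (metis abs_minus_commute abs_diff_less_iff)
  qed
qed

lemma weak_conv_eps0: assumes "weak_conv Fs eps0" "x > 0"
  shows "(\<lambda>n. Fs n (ereal x)) \<longlonglongrightarrow> 1"
proof -
  have "eventually (\<lambda>y. y \<in> {0<..}) (nhds x)" using assms(2)
    by (intro eventually_nhds_in_open) auto
  hence "eventually (\<lambda>y. eps0 (ereal y) = 1) (nhds x)"
    by eventually_elim (auto simp: eps0_def)
  hence "isCont (\<lambda>y. eps0 (ereal y)) x \<longleftrightarrow> isCont (\<lambda>y. 1::real) x" by (rule isCont_cong)
  hence "isCont (\<lambda>y. eps0 (ereal y)) x" by simp
  thus ?thesis using assms unfolding weak_conv_def by (auto simp: eps0_def)
qed

lemma conv0_weak: assumes "\<And>n. Fs n \<in> Delta_plus" "\<forall>x::real>0. (\<lambda>n. Fs n (ereal x)) \<longlonglongrightarrow> 1"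
  shows "weak_conv Fs eps0"
  unfolding weak_conv_def
proof (intro allI impI)
  fix x :: real
  show "(\<lambda>n. Fs n (ereal x)) \<longlonglongrightarrow> eps0 (ereal x)"
  proof (cases "x > 0")
    case True thus ?thesis using assms by (auto simp: eps0_def)
  next
    case False thus ?thesis using DP_nonpos[OF assms(1)] by (simp add: eps0_def)
  qed
qed

lemma conv0_add:
  assumes P: "PN_space \<nu> T Ts" and a: "conv0 \<nu> a" and b: "conv0 \<nu> b"
  shows "conv0 \<nu> (\<lambda>m. a m + b m)"
  unfolding conv0_def
proof (intro allI impI)
  fix x :: real assume "x > 0"
  have TF: "triangle_function T" "continuous_tf T" using PN_T[OF P] by auto
  have wa: "weak_conv (\<lambda>n. \<nu> (a n)) eps0"
    by (rule conv0_weak[of "\<lambda>n. \<nu> (a n)"]) (use a PN_DP[OF P] in \<open>simp_all add: conv0_def\<close>)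
  have wb: "weak_conv (\<lambda>n. \<nu> (b n)) eps0"
    by (rule conv0_weak[of "\<lambda>n. \<nu> (b n)"]) (use b PN_DP[OF P] in \<open>simp_all add: conv0_def\<close>)
  have "weak_conv (\<lambda>n. T (\<nu> (a n)) (\<nu> (b n))) (T eps0 eps0)"
    by (rule ctf_apply[OF TF(2) PN_DP[OF P] PN_DP[OF P] eps0_in eps0_in wa wb])
  moreover have "T eps0 eps0 = eps0" using TF(1) eps0_in unfolding triangle_function_def by blast
  ultimately have L: "(\<lambda>n. T (\<nu> (a n)) (\<nu> (b n)) (ereal x)) \<longlonglongrightarrow> 1"
    using weak_conv_eps0 \<open>x>0\<close> by metis
  show "(\<lambda>m. \<nu> (a m + b m) (ereal x)) \<longlonglongrightarrow> 1"
  proof (rule real_tendsto_sandwich[OF _ _ L tendsto_const])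
    show "eventually (\<lambda>n. T (\<nu> (a n)) (\<nu> (b n)) (ereal x) \<le> \<nu> (a n + b n) (ereal x)) sequentially"
      by (intro always_eventually allI) (use PN_N3[OF P] in \<open>auto simp: le_fun_def\<close>)
    show "eventually (\<lambda>n. \<nu> (a n + b n) (ereal x) \<le> 1) sequentially"
      by (intro always_eventually allI) (use DP_bounds[OF PN_DP[OF P]] in auto)
  qed
qed

lemma conv0_neg: assumes P: "PN_space \<nu> T Ts" and a: "conv0 \<nu> a"
  shows "conv0 \<nu> (\<lambda>m. - a m)"
proof -
  have "\<nu> (- a m) = \<nu> (a m)" for m using PN_N2[OF P] by blast
  thus ?thesis using a unfolding conv0_def by simp
qed

lemma conv0_const: assumes P: "PN_space \<nu> T Ts" and a: "conv0 \<nu> (\<lambda>m. y)"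
  shows "y = 0"
proof -
  have "\<nu> y (ereal x) = 1" if "x > 0" for x
    using a that unfolding conv0_def by (simp add: LIMSEQ_const_iff)
  hence "\<nu> y = eps0"
    apply (intro ext)
    subgoal for z
      by (cases z) (auto simp: eps0_def DP_inf[OF PN_DP[OF P]] DP_nonpos[OF PN_DP[OF P]])
    done
  thus ?thesis using PN_N1[OF P] by blast
qed

lemma conv0_subseq: "conv0 \<nu> xs \<Longrightarrow> strict_mono r \<Longrightarrow> conv0 \<nu> (\<lambda>m. xs (r m))"
  unfolding conv0_def using LIMSEQ_subseq_LIMSEQ[unfolded o_def] by blast

lemma conv0_dom: assumes "conv0 \<nu> xs" "PN_space \<nu> T Ts" "\<And>m. \<nu> (xs m) \<le> \<nu> (ys m)"
  shows "conv0 \<nu> ys"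
  unfolding conv0_def
proof (intro allI impI)
  fix x :: real assume "x > 0"
  show "(\<lambda>m. \<nu> (ys m) (ereal x)) \<longlonglongrightarrow> 1"
    apply (rule real_tendsto_sandwich[where f="\<lambda>m. \<nu> (xs m) (ereal x)", OF _ _ _ tendsto_const])
    using assms(1,3) \<open>x>0\<close> DP_bounds[OF PN_DP[OF assms(2)]] unfolding conv0_def le_fun_def by auto
qed


lemma arch_lemma:
  assumes P: "PN_space \<nu> T Ts" and A: "archimedean_tf Ts" and ne: "\<nu> p \<noteq> eps_inf"
  shows "\<forall>x::real>0. (\<lambda>n. \<nu> ((1/2::real)^n *\<^sub>R p) (ereal x)) \<longlonglongrightarrow> 1"
proof -
  define F where "F n = \<nu> ((1/2::real)^n *\<^sub>R p)" for n
  have FD: "F n \<in> Delta_plus" for n unfolding F_def by (rule PN_DP[OF P])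
  have TS: "triangle_function Ts" "continuous_tf Ts" using PN_T[OF P] by auto
  have Fsuc: "F n \<le> F (Suc n)" for n
  proof -
    have e: "(1/2::real)^(Suc n) *\<^sub>R p = (1/2::real) *\<^sub>R ((1/2::real)^n *\<^sub>R p)" by simp
    have "\<nu> ((1/2::real)^n *\<^sub>R p) \<le> \<nu> ((1/2::real) *\<^sub>R ((1/2::real)^n *\<^sub>R p))"
      by (rule scale_mono[OF P]) simp
    thus ?thesis unfolding F_def e .
  qed
  have inc: "incseq (\<lambda>n. F n x)" for x
    by (rule incseq_SucI) (use Fsuc in \<open>auto simp: le_fun_def\<close>)
  have bdd: "bdd_above (range (\<lambda>n. F n x))" for x
    by (rule bdd_aboveI2[where M=1]) (use DP_bounds[OF FD] in auto)
  define L where "L x = (SUP n. F n x)" for x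
  have FL: "F n x \<le> L x" for n x unfolding L_def by (rule cSUP_upper[OF _ bdd]) simp
  have L1: "L x \<le> 1" for x unfolding L_def by (rule cSUP_least) (use DP_bounds[OF FD] in auto)
  have Llim: "(\<lambda>n. F n x) \<longlonglongrightarrow> L x" for x unfolding L_def by (rule LIMSEQ_incseq_SUP[OF bdd inc])
  have LD: "L \<in> Delta_plus"
  proof -
    have b: "0 \<le> L x \<and> L x \<le> 1" for x using FL[of 0 x] DP_bounds[OF FD, of 0 x] L1[of x] by auto
    have m: "mono L"
    proof (rule monoI)
      fix x y :: ereal assume "x \<le> y"
      show "L x \<le> L y" unfolding L_def
        by (rule cSUP_mono[OF _ bdd]) (use DP_mono[OF FD \<open>x \<le> y\<close>] in auto)
    qed
    have z: "L 0 = 0" unfolding L_def using DP_0[OF FD] by simp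
    have i: "L \<infinity> = 1" unfolding L_def using DP_inf[OF FD] by simp
    have lc: "continuous (at_left x) (\<lambda>y::real. L (ereal y))" for x :: real
      unfolding continuous_within
    proof (rule order_tendstoI)
      fix a assume "a < L (ereal x)"
      then obtain n where n: "a < F n (ereal x)" unfolding L_def
        using less_cSUP_iff[OF _ bdd] by blast
      have "((\<lambda>y. F n (ereal y)) \<longlongrightarrow> F n (ereal x)) (at_left x)"
        using DP_lc[OF FD[of n], of x] unfolding continuous_within .
      hence "eventually (\<lambda>y. a < F n (ereal y)) (at_left x)" using n by (rule order_tendstoD)
      thus "eventually (\<lambda>y. a < L (ereal y)) (at_left x)"
        by eventually_elim (use FL in \<open>fastforce intro: less_le_trans\<close>)
    next
      fix a assume "L (ereal x) < a"
      show "eventually (\<lambda>y. L (ereal y) < a) (at_left x)"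
        unfolding eventually_at_filter
      proof (rule always_eventually, intro allI impI)
        fix y assume "y \<in> {..<x}"
        hence "L (ereal y) \<le> L (ereal x)" using m by (auto intro: monoD)
        thus "L (ereal y) < a" using \<open>L (ereal x) < a\<close> by simp
      qed
    qed
    show ?thesis unfolding Delta_plus_def using b m z i lc by blast
  qed
  define H where "H = Ts L L"
  have HD: "H \<in> Delta_plus" unfolding H_def using TS(1) LD unfolding triangle_function_def by blast
  have wF: "weak_conv (\<lambda>n. F (Suc n)) L"
    unfolding weak_conv_def using Llim LIMSEQ_Suc by blast
  have wH: "weak_conv (\<lambda>n. Ts (F (Suc n)) (F (Suc n))) H"
    unfolding H_def by (rule ctf_apply[OF TS(2) FD FD LD LD wF wF])
  have FT: "F n \<le> Ts (F (Suc n)) (F (Suc n))" for n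
  proof -
    have e: "(1/2::real) *\<^sub>R ((1/2::real)^n *\<^sub>R p) = (1/2::real)^(Suc n) *\<^sub>R p" by simp
    have h: "(1 - 1/2::real) = 1/2" by simp
    have "\<nu> ((1/2::real)^n *\<^sub>R p) \<le> Ts (\<nu> ((1/2::real) *\<^sub>R ((1/2::real)^n *\<^sub>R p))) (\<nu> ((1 - 1/2::real) *\<^sub>R ((1/2::real)^n *\<^sub>R p)))"
      by (rule PN_N4[OF P]) simp_all
    thus ?thesis unfolding F_def h e .
  qed
  have LHc: "L (ereal x) \<le> H (ereal x)" if "isCont (\<lambda>y. H (ereal y)) x" for x
  proof (rule LIMSEQ_le[OF Llim])
    show "(\<lambda>n. Ts (F (Suc n)) (F (Suc n)) (ereal x)) \<longlonglongrightarrow> H (ereal x)"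
      using wH that unfolding weak_conv_def by blast
    show "\<exists>N. \<forall>n\<ge>N. F n (ereal x) \<le> Ts (F (Suc n)) (F (Suc n)) (ereal x)"
      using FT by (auto simp: le_fun_def)
  qed
  have LHr: "L (ereal x) \<le> H (ereal x)" for x
  proof (rule ccontr)
    assume "\<not> ?thesis"
    hence lt: "H (ereal x) < L (ereal x)" by simp
    have "((\<lambda>y. L (ereal y)) \<longlongrightarrow> L (ereal x)) (at_left x)"
      using LD[THEN DP_lc, of x] unfolding continuous_within .
    hence "eventually (\<lambda>y. H (ereal x) < L (ereal y)) (at_left x)" using lt by (rule order_tendstoD)
    then obtain b where b: "b < x" "\<And>y. b < y \<Longrightarrow> y < x \<Longrightarrow> H (ereal x) < L (ereal y)"
      unfolding eventually_at_left_field by blast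
    have mH: "mono (\<lambda>y::real. H (ereal y))" using DP_mono[OF HD] by (auto intro: monoI)
    obtain y where y: "y \<in> {b<..<x}" "y \<notin> {a. \<not> isCont (\<lambda>y. H (ereal y)) a}"
      using open_minus_countable[OF mono_ctble_discont[OF mH], of "{b<..<x}"] b(1) by auto
    have "L (ereal y) \<le> H (ereal y)" using LHc y(2) by simp
    also have "\<dots> \<le> H (ereal x)" using y(1) DP_mono[OF HD] by simp
    also have "\<dots> < L (ereal y)" using b(2) y(1) by simp
    finally show False by simp
  qed
  have LH: "L \<le> H"
  proof (rule le_funI)
    fix z show "L z \<le> H z"
    proof (cases z)
      case (real r) thus ?thesis using LHr by simp
    next
      case PInf thus ?thesis using DP_inf[OF LD] DP_inf[OF HD] by simp
    next
      case MInf
      have "L z \<le> L 0" using DP_mono[OF LD] MInf by simp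
      thus ?thesis using DP_0[OF LD] DP_bounds[OF HD, of z] by simp
    qed
  qed
  have "H \<le> L" unfolding H_def by (rule tf_le[OF TS(1) LD LD])
  hence "Ts L L = L" using LH unfolding H_def by (rule antisym)
  hence "L = eps0 \<or> L = eps_inf" using A LD unfolding archimedean_tf_def by blast
  moreover have "L \<noteq> eps_inf"
  proof
    assume Li: "L = eps_inf"
    have "\<nu> p = eps_inf"
    proof (rule ext)
      fix z
      have F0: "F 0 = \<nu> p" by (simp add: F_def)
      show "\<nu> p z = eps_inf z"
      proof (cases z)
        case (real r)
        have "\<nu> p z \<le> L z" using FL[of 0 z] F0 by simp
        thus ?thesis using Li real DP_bounds[OF PN_DP[OF P], of p z] by (simp add: eps_inf_def)
      next
        case PInf thus ?thesis using DP_inf[OF PN_DP[OF P]] by (simp add: eps_inf_def)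
      next
        case MInf
        have "\<nu> p z \<le> \<nu> p 0" using DP_mono[OF PN_DP[OF P]] MInf by simp
        thus ?thesis using DP_0[OF PN_DP[OF P]] DP_bounds[OF PN_DP[OF P], of p z] MInf
          by (simp add: eps_inf_def)
      qed
    qed
    thus False using ne by simp
  qed
  ultimately have "L = eps0" by simp
  show ?thesis
  proof (intro allI impI)
    fix x :: real assume "x > 0"
    have "L (ereal x) = 1" using \<open>L = eps0\<close> \<open>x > 0\<close> by (simp add: eps0_def)
    thus "(\<lambda>n. \<nu> ((1/2::real)^n *\<^sub>R p) (ereal x)) \<longlonglongrightarrow> 1"
      using Llim[of "ereal x"] unfolding F_def by simp
  qed
qed


lemma conv0_scal:
  assumes P: "PN_space \<nu> T Ts" and A: "archimedean_tf Ts" and ne: "\<nu> p \<noteq> eps_inf"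
    and c: "c \<longlonglongrightarrow> 0"
  shows "conv0 \<nu> (\<lambda>m. c m *\<^sub>R p)"
  unfolding conv0_def
proof (intro allI impI)
  fix x :: real assume "x > 0"
  have lim: "(\<lambda>n. \<nu> ((1/2::real)^n *\<^sub>R p) (ereal x)) \<longlonglongrightarrow> 1"
    using arch_lemma[OF P A ne] \<open>x>0\<close> by blast
  show "(\<lambda>m. \<nu> (c m *\<^sub>R p) (ereal x)) \<longlonglongrightarrow> 1"
  proof (rule LIMSEQ_I)
    fix r :: real assume "r > 0"
    obtain n where n: "norm (\<nu> ((1/2::real)^n *\<^sub>R p) (ereal x) - 1) < r"
      using LIMSEQ_D[OF lim \<open>r>0\<close>] by blast
    have "(1/2::real)^n > 0" by simp
    then obtain M where M: "\<forall>m\<ge>M. norm (c m - 0) < (1/2::real)^n"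
      using LIMSEQ_D[OF c] by blast
    show "\<exists>M. \<forall>m\<ge>M. norm (\<nu> (c m *\<^sub>R p) (ereal x) - 1) < r"
    proof (intro exI allI impI)
      fix m assume "m \<ge> M"
      hence cm: "\<bar>c m\<bar> < (1/2::real)^n" using M by simp
      have e: "c m *\<^sub>R p = (c m * 2^n) *\<^sub>R ((1/2::real)^n *\<^sub>R p)"
        by (simp add: power_one_over)
      have "\<bar>c m * 2^n\<bar> \<le> 1"
      proof -
        have "\<bar>c m * 2^n\<bar> = \<bar>c m\<bar> * 2^n" by (simp add: abs_mult)
        also have "\<dots> \<le> (1/2::real)^n * 2^n" using cm by (intro mult_right_mono) auto
        also have "\<dots> = 1" by (simp add: power_one_over)
        finally show ?thesis .
      qed
      hence "\<nu> ((1/2::real)^n *\<^sub>R p) \<le> \<nu> (c m *\<^sub>R p)" unfolding e by (rule scale_mono[OF P])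
      hence "\<nu> ((1/2::real)^n *\<^sub>R p) (ereal x) \<le> \<nu> (c m *\<^sub>R p) (ereal x)" by (simp add: le_fun_def)
      moreover have "\<nu> (c m *\<^sub>R p) (ereal x) \<le> 1" using DP_bounds[OF PN_DP[OF P]] by blast
      ultimately show "norm (\<nu> (c m *\<^sub>R p) (ereal x) - 1) < r" using n unfolding real_norm_def by arith
    qed
  qed
qed

lemma conv0_sum:
  assumes P: "PN_space \<nu> T Ts" and A: "archimedean_tf Ts" and ne: "\<forall>p. \<nu> p \<noteq> eps_inf"
    and fin: "finite B"
  shows "(\<forall>b\<in>B. (\<lambda>m. c m b) \<longlonglongrightarrow> 0) \<Longrightarrow> conv0 \<nu> (\<lambda>m. \<Sum>b\<in>B. c m b *\<^sub>R b)"
  using fin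
proof (induction B rule: finite_induct)
  case empty
  have "\<nu> 0 = eps0" using PN_N1[OF P] by blast
  thus ?case unfolding conv0_def by (simp add: eps0_def)
next
  case (insert a F)
  have "conv0 \<nu> (\<lambda>m. c m a *\<^sub>R a + (\<Sum>b\<in>F. c m b *\<^sub>R b))"
    by (rule conv0_add[OF P conv0_scal[OF P A ne[rule_format]]]) (use insert in auto)
  thus ?case using insert by simp
qed

lemma bw_finite:
  fixes f :: "nat \<Rightarrow> 'b \<Rightarrow> real"
  assumes fin: "finite B" and bd: "\<And>m b. \<bar>f m b\<bar> \<le> C"
  shows "\<exists>s g. strict_mono s \<and> (\<forall>b\<in>B. (\<lambda>m. f (s m) b) \<longlonglongrightarrow> g b)"
  using fin
proof (induction B rule: finite_induct)
  case empty
  show ?case by (rule exI[of _ id]) (auto simp: strict_mono_def)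
next
  case (insert a F)
  then obtain s1 g1 where s1: "strict_mono s1" and g1: "\<forall>b\<in>F. (\<lambda>m. f (s1 m) b) \<longlonglongrightarrow> g1 b" by blast
  have "bounded (range (\<lambda>m. f (s1 m) a))" unfolding bounded_real using bd by blast
  then obtain l s2 where s2: "strict_mono s2" and l: "((\<lambda>m. f (s1 m) a) \<circ> s2) \<longlonglongrightarrow> l"
    using bounded_imp_convergent_subsequence by blast
  show ?case
  proof (intro exI conjI)
    show "strict_mono (s1 \<circ> s2)" using s1 s2 by (rule strict_mono_o)
    show "\<forall>b\<in>insert a F. (\<lambda>m. f ((s1 \<circ> s2) m) b) \<longlonglongrightarrow> (g1(a := l)) b"
    proof
      fix b assume "b \<in> insert a F"
      show "(\<lambda>m. f ((s1 \<circ> s2) m) b) \<longlonglongrightarrow> (g1(a := l)) b"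
      proof (cases "b = a")
        case True thus ?thesis using l by (simp add: o_def)
      next
        case False
        hence "b \<in> F" "b \<noteq> a" using \<open>b \<in> insert a F\<close> by auto
        have "((\<lambda>m. f (s1 m) b) \<circ> s2) \<longlonglongrightarrow> g1 b" using LIMSEQ_subseq_LIMSEQ[OF _ s2] g1 \<open>b\<in>F\<close> by blast
        thus ?thesis using \<open>b \<noteq> a\<close> by (simp add: o_def)
      qed
    qed
  qed
qed



lemma conv0_iff_N:
  fixes \<nu> :: "'a::real_vector \<Rightarrow> dd"
  assumes P: "PN_space \<nu> T Ts" and A: "archimedean_tf Ts" and ne: "\<forall>p. \<nu> p \<noteq> eps_inf"
    and fin: "finite Bs" and ind: "independent Bs" and sp: "\<And>x. x \<in> span Bs"
  shows "conv0 \<nu> xs \<longleftrightarrow> (\<lambda>m. \<Sum>b\<in>Bs. \<bar>representation Bs (xs m) b\<bar>) \<longlonglongrightarrow> 0"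
proof -
  define N where "N x = (\<Sum>b\<in>Bs. \<bar>representation Bs x b\<bar>)" for x
  have rep: "(\<Sum>b\<in>Bs. representation Bs x b *\<^sub>R b) = x" for x
    by (rule real_vector.sum_representation_eq[OF ind sp fin order_refl])
  have repN: "\<bar>representation Bs x b\<bar> \<le> N x" if "b \<in> Bs" for x b
    unfolding N_def by (rule member_le_sum) (use that fin in auto)
  have N0: "N x \<ge> 0" for x unfolding N_def by (rule sum_nonneg) auto
  show ?thesis unfolding N_def[symmetric]
  proof
    assume "(\<lambda>m. N (xs m)) \<longlonglongrightarrow> 0"
    hence "\<forall>b\<in>Bs. (\<lambda>m. representation Bs (xs m) b) \<longlonglongrightarrow> 0"
      by (auto intro!: Lim_null_comparison[where g="\<lambda>m. N (xs m)"] always_eventually repN)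
    hence "conv0 \<nu> (\<lambda>m. \<Sum>b\<in>Bs. representation Bs (xs m) b *\<^sub>R b)"
      by (rule conv0_sum[OF P A ne fin])
    thus "conv0 \<nu> xs" unfolding rep .
  next
    assume cx: "conv0 \<nu> xs"
    show "(\<lambda>m. N (xs m)) \<longlonglongrightarrow> 0"
    proof (rule ccontr)
      assume nc: "\<not> (\<lambda>m. N (xs m)) \<longlonglongrightarrow> 0"
      obtain \<delta> where d: "\<delta> > 0" "\<forall>M. \<exists>m\<ge>M. \<delta> \<le> N (xs m)"
      proof -
        from nc obtain r where r: "r > 0" "\<not> (\<exists>M. \<forall>m\<ge>M. norm (N (xs m) - 0) < r)"
          unfolding LIMSEQ_def dist_real_def by auto
        hence "\<forall>M. \<exists>m\<ge>M. r \<le> N (xs m)" using N0 by (auto simp: not_less)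
        thus ?thesis using that r(1) by blast
      qed
      hence "infinite {m. \<delta> \<le> N (xs m)}" unfolding infinite_nat_iff_unbounded_le by blast
      from infinite_enumerate[OF this] obtain r :: "nat \<Rightarrow> nat" where r0: "strict_mono r" "\<forall>n. r n \<in> {m. \<delta> \<le> N (xs m)}"
        by blast
      have r: "strict_mono r" "\<And>n. \<delta> \<le> N (xs (r n))" using r0 by auto
      define zs where "zs m = xs (r m)" for m
      have cz: "conv0 \<nu> zs" unfolding zs_def by (rule conv0_subseq[OF cx r(1)])
      have Nz: "N (zs m) \<ge> \<delta>" for m using r(2) by (simp add: zs_def)
      have Npos: "N (zs m) > 0" for m using Nz[of m] d(1) by linarith
      define f where "f m b = \<delta> / N (zs m) * representation Bs (zs m) b" for m b
      have fb: "\<bar>f m b\<bar> \<le> \<delta>" for m b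
      proof (cases "b \<in> Bs")
        case True
        have "\<bar>f m b\<bar> = \<delta> / N (zs m) * \<bar>representation Bs (zs m) b\<bar>"
          unfolding f_def using d(1) Npos[of m] by (simp add: abs_mult)
        also have "\<dots> \<le> \<delta> / N (zs m) * N (zs m)"
          using repN[OF True] d(1) Npos[of m] by (intro mult_left_mono) auto
        also have "\<dots> = \<delta>" using Npos[of m] by simp
        finally show ?thesis .
      next
        case False
        hence "representation Bs (zs m) b = 0"
          using real_vector.representation_ne_zero by metis
        thus ?thesis unfolding f_def using d(1) by simp
      qed
      obtain s :: "nat \<Rightarrow> nat" and g where s: "strict_mono s" and g: "\<forall>b\<in>Bs. (\<lambda>m. f (s m) b) \<longlonglongrightarrow> g b"
        using bw_finite[of Bs f \<delta>, OF fin fb] by blast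
      define ys where "ys m = (\<Sum>b\<in>Bs. f (s m) b *\<^sub>R b)" for m
      define y where "y = (\<Sum>b\<in>Bs. g b *\<^sub>R b)"
      have ys_eq: "ys m = (\<delta> / N (zs (s m))) *\<^sub>R zs (s m)" for m
      proof -
        have "ys m = (\<delta> / N (zs (s m))) *\<^sub>R (\<Sum>b\<in>Bs. representation Bs (zs (s m)) b *\<^sub>R b)"
          unfolding ys_def f_def by (simp add: scaleR_sum_right)
        thus ?thesis unfolding rep .
      qed
      have cy: "conv0 \<nu> ys"
      proof (rule conv0_dom[OF conv0_subseq[OF cz s] P])
        fix m
        have "\<bar>\<delta> / N (zs (s m))\<bar> \<le> 1" using Nz[of "s m"] d(1) Npos[of "s m"] by simp
        thus "\<nu> (zs (s m)) \<le> \<nu> (ys m)" unfolding ys_eq by (rule scale_mono[OF P])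
      qed
      have cyy: "conv0 \<nu> (\<lambda>m. ys m - y)"
      proof -
        have "ys m - y = (\<Sum>b\<in>Bs. (f (s m) b - g b) *\<^sub>R b)" for m
          unfolding ys_def y_def by (simp add: scaleR_diff_left sum_subtractf)
        moreover have "conv0 \<nu> (\<lambda>m. \<Sum>b\<in>Bs. (f (s m) b - g b) *\<^sub>R b)"
        proof (rule conv0_sum[OF P A ne fin])
          show "\<forall>b\<in>Bs. (\<lambda>m. f (s m) b - g b) \<longlonglongrightarrow> 0"
            using g by (auto intro: LIM_zero)
        qed
        ultimately show ?thesis by simp
      qed
      have "conv0 \<nu> (\<lambda>m. ys m + - (ys m - y))"
        by (rule conv0_add[OF P cy conv0_neg[OF P cyy]])
      hence "conv0 \<nu> (\<lambda>m. y)" by simp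
      hence y0: "y = 0" by (rule conv0_const[OF P])
      have sumf: "(\<Sum>b\<in>Bs. \<bar>f m b\<bar>) = \<delta>" for m
      proof -
        have "(\<Sum>b\<in>Bs. \<bar>f m b\<bar>) = (\<Sum>b\<in>Bs. \<delta> / N (zs m) * \<bar>representation Bs (zs m) b\<bar>)"
          unfolding f_def using d(1) Npos[of m] by (intro sum.cong) (auto simp: abs_mult)
        also have "\<dots> = \<delta> / N (zs m) * N (zs m)" unfolding N_def by (simp add: sum_distrib_left)
        also have "\<dots> = \<delta>" using Npos[of m] by simp
        finally show ?thesis .
      qed
      have "(\<lambda>m. \<Sum>b\<in>Bs. \<bar>f (s m) b\<bar>) \<longlonglongrightarrow> (\<Sum>b\<in>Bs. \<bar>g b\<bar>)"
        using g by (auto intro!: tendsto_sum tendsto_rabs)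
      hence "(\<Sum>b\<in>Bs. \<bar>g b\<bar>) = \<delta>" unfolding sumf by (simp add: LIMSEQ_const_iff)
      hence gne: "\<exists>b\<in>Bs. g b \<noteq> 0"
      proof (rule contrapos_pp)
        assume "\<not> (\<exists>b\<in>Bs. g b \<noteq> 0)"
        hence "(\<Sum>b\<in>Bs. \<bar>g b\<bar>) = 0" by simp
        thus "(\<Sum>b\<in>Bs. \<bar>g b\<bar>) \<noteq> \<delta>" using d(1) by simp
      qed
      have "dependent Bs" unfolding real_vector.dependent_finite[OF fin]
        by (rule exI[of _ g]) (use gne y0 y_def in simp)
      thus False using ind by simp
    qed
  qed
qed

theorem theorem20:
  fixes \<nu> \<mu> :: "'a::real_vector \<Rightarrow> dd"
    and T Ts T' Ts' :: "dd \<Rightarrow> dd \<Rightarrow> dd"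
  assumes "\<exists>B. finite B \<and> span B = (UNIV :: 'a set)"
    and "PN_space \<nu> T Ts" and "PN_space \<mu> T' Ts'"
    and "archimedean_tf Ts" and "archimedean_tf Ts'"
    and "\<forall>p. \<nu> p \<noteq> eps_inf" and "\<forall>p. \<mu> p \<noteq> eps_inf"
  shows "\<forall>ps p. strongly_converges \<nu> ps p \<longleftrightarrow> strongly_converges \<mu> ps p"
proof -
  obtain B where B: "finite B" "span B = (UNIV :: 'a set)" using assms(1) by blast
  obtain Bs where Bs: "Bs \<subseteq> B" "independent Bs" "B \<subseteq> span Bs"
    using real_vector.maximal_independent_subset[of B] by blast
  have fin: "finite Bs" using finite_subset[OF Bs(1) B(1)] .
  have "span B \<subseteq> span Bs" using Bs(3) by (rule real_vector.span_minimal) (rule real_vector.subspace_span)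
  hence sp: "\<And>x. x \<in> span Bs" using B(2) by auto
  show ?thesis
  proof (intro allI)
    fix ps p
    show "strongly_converges \<nu> ps p \<longleftrightarrow> strongly_converges \<mu> ps p"
      unfolding strong_iff[OF assms(2)] strong_iff[OF assms(3)]
        conv0_iff_N[OF assms(2) assms(4) assms(6) fin Bs(2) sp]
        conv0_iff_N[OF assms(3) assms(5) assms(7) fin Bs(2) sp] ..
  qed
qed

end
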